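(* Let $A$ be a sub-tree of $T$ and $I\subseteq\mathcal{I}_A$. On $[0,d(r_A)]$, the function $f_A^I$ has at most $|V_A^I|$ corner points and at most $|V_A^I|+1$ maximal linear pieces. Moreover, the optimal sets associated with the successive linear pieces (from left to right) form a chain with respect to inclusion, each one containing the previous ones; equivalently, the matryoshka $\mathcal{M}_A^I$ is totally ordered by inclusion and has at most $|V_A^I|+1$ elements.
   Context: Setting. $T$ is a finite tree rooted at $r_T$, node set $V_T$; every edge $e$ has weight $w_e\ge 0$. Every node $v$ has a probability $\pi_v\in(0,1]$ and a prize $p_v\in\mathbb{R}$. $d(v)$ is the total weight of the path from $r_T$ to $v$. A random set $\omega\subseteq V_T$ contains each node $v$ independently with probability $\pi_v$. For $S\subseteq V_T$, $P(S)=1-\prod_{s\in S}(1-\pi_s)$ ($P(\emptyset)=0$). For a node $a$, the sub-tree $A$ rooted at $r_A=a$ consists of $a$ and all its descendants, with node set $V_A$; if $a$ has children $c_1,\dots,c_m$, then $A_i$ ($1\le i\le m$) is the sub-tree rooted at $c_i$, $A_0$ is the sub-tree consisting of the single node $r_A$, $\mathcal{I}_A=\{0,1,\dots,m\}$, and $V_A^I=\bigcup_{i\in I}V_{A_i}$ for $I\subseteq\mathcal{I}_A$. For $Q\subseteq V_T$, $W(Q)$ is the total weight of the edges lying on at least one path from $r_T$ to a node of $Q$. For $S\subseteq V_A$ and $x\le d(r_A)$ the expected profit is $G(S,x)=\sum_{s\in S}p_s\pi_s-\mathbb{E}[W(S\cap\omega)]+x\,P(S)$. Characteristic function. For a sub-tree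 $A$, $I\subseteq\mathcal{I}_A$ and $x\in[0,d(r_A)]$, $f_A^I(x)=\max_{S\subseteq V_A^I}G(S,x)$. A set $S\subseteq V_A^I$ with $G(S,x)=f_A^I(x)$ is an optimal set (for $f_A^I$) at $x$. The matryoshka $\mathcal{M}_A^I$ is the family of all $S\subseteq V_A^I$ such that for some $x\in[0,d(r_A)]$, $S$ is an optimal set at $x$ and no proper superset of $S$ contained in $V_A^I$ is optimal at $x$. *)

theory Defs
  imports "HOL-Analysis.Analysis"
begin

text \<open>The edge (par v, v) (for v \<noteq> r) carries the weight w v.\<close>

definition is_rooted_tree :: "'v set \<Rightarrow> 'v \<Rightarrow> ('v \<Rightarrow> 'v) \<Rightarrow> bool" where
  "is_rooted_tree V r par \<longleftrightarrow> finite V \<and> r \<in> V \<and> par r = r \<and>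
     (\<forall>v\<in>V. par v \<in> V) \<and> (\<forall>v\<in>V. \<exists>k. (par ^^ k) v = r)"

definition ancestors :: "('v \<Rightarrow> 'v) \<Rightarrow> 'v \<Rightarrow> 'v set" where
  "ancestors par v = {(par ^^ k) v | k. True}"

definition subtree :: "'v set \<Rightarrow> ('v \<Rightarrow> 'v) \<Rightarrow> 'v \<Rightarrow> 'v set" where
  "subtree V par a = {u \<in> V. a \<in> ancestors par u}"

definition children :: "'v set \<Rightarrow> 'v \<Rightarrow> ('v \<Rightarrow> 'v) \<Rightarrow> 'v \<Rightarrow> 'v set" where
  "children V r par a = {c \<in> V. c \<noteq> r \<and> par c = a}"

definition depth :: "'v \<Rightarrow> ('v \<Rightarrow> 'v) \<Rightarrow> ('v \<Rightarrow> real) \<Rightarrow> 'v \<Rightarrow> real" where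
  "depth r par w v = (\<Sum>u\<in>ancestors par v - {r}. w u)"

definition Wt :: "'v \<Rightarrow> ('v \<Rightarrow> 'v) \<Rightarrow> ('v \<Rightarrow> real) \<Rightarrow> 'v set \<Rightarrow> real" where
  "Wt r par w Q = (\<Sum>u\<in>(\<Union>q\<in>Q. ancestors par q) - {r}. w u)"

definition Pr :: "('v \<Rightarrow> real) \<Rightarrow> 'v set \<Rightarrow> real" where
  "Pr \<pi> S = 1 - (\<Prod>s\<in>S. 1 - \<pi> s)"

definition prob_omega :: "'v set \<Rightarrow> ('v \<Rightarrow> real) \<Rightarrow> 'v set \<Rightarrow> real" where
  "prob_omega V \<pi> om = (\<Prod>v\<in>om. \<pi> v) * (\<Prod>v\<in>V - om. 1 - \<pi> v)"

definition G :: "'v set \<Rightarrow> 'v \<Rightarrow> ('v \<Rightarrow> 'v) \<Rightarrow> ('v \<Rightarrow> real) \<Rightarrow> ('v \<Rightarrow> real) \<Rightarrow> ('v \<Rightarrow> real)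
    \<Rightarrow> 'v set \<Rightarrow> real \<Rightarrow> real" where
  "G V r par w \<pi> p S x =
     (\<Sum>s\<in>S. p s * \<pi> s) - (\<Sum>om\<in>Pow V. prob_omega V \<pi> om * Wt r par w (S \<inter> om)) + x * Pr \<pi> S"

text \<open>V_A^I, where the index set I is encoded as a subset of {a} \<union> children a:
  the element a stands for index 0 (the single-node sub-tree A_0), a child c stands for
  the sub-tree rooted at c.\<close>
definition VAI :: "'v set \<Rightarrow> ('v \<Rightarrow> 'v) \<Rightarrow> 'v \<Rightarrow> 'v set \<Rightarrow> 'v set" where
  "VAI V par a I = (\<Union>i\<in>I. if i = a then {a} else subtree V par i)"

definition fAI :: "'v set \<Rightarrow> 'v \<Rightarrow> ('v \<Rightarrow> 'v) \<Rightarrow> ('v \<Rightarrow> real) \<Rightarrow> ('v \<Rightarrow> real) \<Rightarrow> ('v \<Rightarrow> real)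
    \<Rightarrow> 'v \<Rightarrow> 'v set \<Rightarrow> real \<Rightarrow> real" where
  "fAI V r par w \<pi> p a I x = Max ((\<lambda>S. G V r par w \<pi> p S x) ` Pow (VAI V par a I))"

definition optimal_set :: "'v set \<Rightarrow> 'v \<Rightarrow> ('v \<Rightarrow> 'v) \<Rightarrow> ('v \<Rightarrow> real) \<Rightarrow> ('v \<Rightarrow> real) \<Rightarrow> ('v \<Rightarrow> real)
    \<Rightarrow> 'v \<Rightarrow> 'v set \<Rightarrow> 'v set \<Rightarrow> real \<Rightarrow> bool" where
  "optimal_set V r par w \<pi> p a I S x \<longleftrightarrow>
     S \<subseteq> VAI V par a I \<and> G V r par w \<pi> p S x = fAI V r par w \<pi> p a I x"

definition matryoshka :: "'v set \<Rightarrow> 'v \<Rightarrow> ('v \<Rightarrow> 'v) \<Rightarrow> ('v \<Rightarrow> real) \<Rightarrow> ('v \<Rightarrow> real) \<Rightarrow> ('v \<Rightarrow> real)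
    \<Rightarrow> 'v \<Rightarrow> 'v set \<Rightarrow> 'v set set" where
  "matryoshka V r par w \<pi> p a I =
     {S. S \<subseteq> VAI V par a I \<and> (\<exists>x\<in>{0..depth r par w a}.
        optimal_set V r par w \<pi> p a I S x \<and>
        (\<forall>S'. S \<subset> S' \<and> S' \<subseteq> VAI V par a I \<longrightarrow> \<not> optimal_set V r par w \<pi> p a I S' x))}"

end

theory Submission
  imports Defs
begin


lemma sorted_between:
  fixes xs :: "real list"
  assumes "sorted xs" "Suc i < length xs" "b \<in> set xs" "xs!i < b" "b < xs!Suc i"
  shows False
proof -
  obtain j where j: "j < length xs" "b = xs!j" using assms(3) by (auto simp: in_set_conv_nth)
  show False
  proof (cases "j \<le> i")
    case True then show ?thesis using sorted_nth_mono[OF assms(1) True] assms j by auto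
  next
    case False then have sj: "Suc i \<le> j" by auto
    show ?thesis using sorted_nth_mono[OF assms(1) sj j(1)] assms j by auto
  qed
qed

lemma pieces:
  fixes f :: "real \<Rightarrow> real" and M :: "real \<Rightarrow> 'a set" and c P :: "'a set \<Rightarrow> real"
  assumes D0: "D \<ge> 0"
    and mono: "\<And>x y. 0 \<le> x \<Longrightarrow> x \<le> y \<Longrightarrow> y \<le> D \<Longrightarrow> M x \<subseteq> M y"
    and fin: "finite (M ` {0..D})" and cardM: "card (M ` {0..D}) \<le> n + 1"
    and fM: "\<And>x. x \<in> {0..D} \<Longrightarrow> f x = c (M x) + P (M x) * x"
    and fge: "\<And>x S. x \<in> {0..D} \<Longrightarrow> S \<in> M ` {0..D} \<Longrightarrow> c S + P S * x \<le> f x"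
  shows "(finite {x \<in> {0<..<D}. \<not> f differentiable (at x)}
         \<and> card {x \<in> {0<..<D}. \<not> f differentiable (at x)} \<le> n)
     \<and> (\<exists>k t. k \<le> n + 1 \<and> t 0 = 0 \<and> t k = D \<and> (\<forall>i<k. t i < t (Suc i)) \<and>
           (\<forall>i<k. \<exists>\<alpha> \<beta>. \<forall>x\<in>{t i..t (Suc i)}. f x = \<alpha> + \<beta> * x))"
proof -
  define L where "L S = Inf {x \<in> {0..D}. M x = S}" for S
  define B where "B = insert D (L ` (M ` {0..D}))"
  have finB: "finite B" using fin by (simp add: B_def)
  have cardB: "card B \<le> n + 2"
  proof -
    have "card B \<le> Suc (card (L ` (M ` {0..D})))" unfolding B_def
      by (metis card_insert_le_m1 le_SucI card_insert_if fin finite_imageI le_refl)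
    also have "\<dots> \<le> Suc (card (M ` {0..D}))" using card_image_le[OF fin, of L] by simp
    finally show ?thesis using cardM by simp
  qed
  have Lprop: "0 \<le> L (M y) \<and> L (M y) \<le> y" if "y \<in> {0..D}" for y
  proof -
    have ne: "{x \<in> {0..D}. M x = M y} \<noteq> {}" using that by blast
    have bdd: "bdd_below {x \<in> {0..D}. M x = M y}" by (rule bdd_belowI[of _ 0]) auto
    show ?thesis unfolding L_def
      using cInf_greatest[OF ne, of 0] cInf_lower[OF _ bdd, of y] that by auto
  qed
  have Bsub: "B \<subseteq> {0..D}" unfolding B_def using Lprop D0 by fastforce
  have B0: "0 \<in> B" using Lprop[of 0] D0 unfolding B_def by fastforce
  have DB: "D \<in> B" by (simp add: B_def)
  have key: "\<exists>b\<in>B. x \<le> b \<and> b \<le> y" if "0 \<le> x" "x < y" "y \<le> D" "M x \<noteq> M y" for x y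
  proof (intro bexI conjI)
    show "L (M y) \<in> B" using that unfolding B_def by auto
    show "L (M y) \<le> y" using Lprop[of y] that by auto
    have ne: "{z \<in> {0..D}. M z = M y} \<noteq> {}" using that by auto
    show "x \<le> L (M y)" unfolding L_def
    proof (rule cInf_greatest[OF ne])
      fix z assume z: "z \<in> {z \<in> {0..D}. M z = M y}"
      show "x \<le> z"
      proof (rule ccontr)
        assume zx: "\<not> x \<le> z"
        have "M z \<subseteq> M x" using mono[of z x] z zx that by auto
        moreover have "M x \<subseteq> M y" using mono[of x y] that by auto
        ultimately show False using z that by auto
      qed
    qed
  qed
  define xs where "xs = sorted_list_of_set B"
  have sxs: "sorted xs" "distinct xs" and setxs: "set xs = B" and lenxs: "length xs = card B"
    using finB by (auto simp: xs_def)
  have lenpos: "length xs > 0" using setxs DB by (cases xs) auto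
  have xs_in: "xs!i \<in> {0..D}" if "i < length xs" for i using that setxs Bsub nth_mem by blast
  have strict: "xs!i < xs!Suc i" if "Suc i < length xs" for i
  proof -
    have "xs!i \<le> xs!Suc i" using sorted_nth_mono[OF sxs(1), of i "Suc i"] that by simp
    moreover have "xs!i \<noteq> xs!Suc i" using nth_eq_iff_index_eq[OF sxs(2), of i "Suc i"] that by simp
    ultimately show ?thesis by simp
  qed
  have const: "M x = M y" if "Suc i < length xs" "xs!i < x" "x < xs!Suc i" "xs!i < y" "y < xs!Suc i" for i x y
  proof (rule ccontr)
    assume ne: "M x \<noteq> M y"
    have x0: "0 \<le> x" "y \<le> D" "0 \<le> y" "x \<le> D" using xs_in[of i] xs_in[of "Suc i"] that by auto
    { assume "x < y" then obtain b where "b \<in> B" "x \<le> b" "b \<le> y" using key[of x y] ne x0 by auto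
      then have False using sorted_between[OF sxs(1) that(1), of b] setxs that by auto }
    moreover
    { assume "y < x" then obtain b where "b \<in> B" "y \<le> b" "b \<le> x" using key[of y x] ne[symmetric] x0 that by auto
      then have False using sorted_between[OF sxs(1) that(1), of b] setxs that by auto }
    ultimately show False using ne by force
  qed
  have affine: "\<forall>x\<in>{xs!i..xs!Suc i}. f x = c (M ((xs!i + xs!Suc i)/2)) + P (M ((xs!i + xs!Suc i)/2)) * x"
    if i: "Suc i < length xs" for i
  proof
    fix x assume x: "x \<in> {xs!i..xs!Suc i}"
    define m where "m = (xs!i + xs!Suc i)/2"
    have lt: "xs!i < xs!Suc i" using strict[OF i] .
    have m: "xs!i < m" "m < xs!Suc i" using lt by (auto simp: m_def)
    have mD: "m \<in> {0..D}" using xs_in[of i] xs_in[of "Suc i"] m i by auto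
    have xD: "x \<in> {0..D}" using xs_in[of i] xs_in[of "Suc i"] x i by auto
    have open_eq: "f z = c (M m) + P (M m) * z" if "z \<in> {xs!i<..<xs!Suc i}" for z
    proof -
      have "M z = M m" using const[OF i, of z m] that m by auto
      moreover have "z \<in> {0..D}" using xs_in[of i] xs_in[of "Suc i"] that i by auto
      ultimately show ?thesis using fM by auto
    qed
    have "c (M m) + P (M m) * x - (c (M x) + P (M x) * x) \<ge> 0"
    proof (rule continuous_ge_on_closure[where S="{xs!i<..<xs!Suc i}"
          and f="\<lambda>z. c (M m) + P (M m) * z - (c (M x) + P (M x) * z)"])
      show "continuous_on (closure {xs!i<..<xs!Suc i}) (\<lambda>z. c (M m) + P (M m) * z - (c (M x) + P (M x) * z))"
        by (intro continuous_intros)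
      show "x \<in> closure {xs!i<..<xs!Suc i}" using x lt by simp
      fix z assume z: "z \<in> {xs!i<..<xs!Suc i}"
      have "z \<in> {0..D}" using xs_in[of i] xs_in[of "Suc i"] z i by auto
      moreover have "M x \<in> M ` {0..D}" using xD by auto
      ultimately have "c (M x) + P (M x) * z \<le> f z" using fge by blast
      then show "0 \<le> c (M m) + P (M m) * z - (c (M x) + P (M x) * z)" using open_eq[OF z] by simp
    qed
    moreover have "c (M m) + P (M m) * x \<le> f x" using fge[OF xD, of "M m"] mD by auto
    ultimately show "f x = c (M m) + P (M m) * x" unfolding m_def[symmetric] using fM[OF xD] by linarith
  qed
  have part2: "\<exists>k t. k \<le> n + 1 \<and> t 0 = 0 \<and> t k = D \<and> (\<forall>i<k. t i < t (Suc i)) \<and>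
           (\<forall>i<k. \<exists>\<alpha> \<beta>. \<forall>x\<in>{t i..t (Suc i)}. f x = \<alpha> + \<beta> * x)"
  proof (intro exI conjI)
    show "length xs - 1 \<le> n + 1" using lenxs cardB by simp
    show "xs!0 = 0"
    proof -
      obtain j where j: "j < length xs" "xs!j = 0" using B0 setxs by (auto simp: in_set_conv_nth)
      have "xs!0 \<le> xs!j" using sorted_nth_mono[OF sxs(1), of 0 j] j by simp
      then show ?thesis using xs_in[OF lenpos] j by auto
    qed
    show "xs!(length xs - 1) = D"
    proof -
      obtain j where j: "j < length xs" "xs!j = D" using DB setxs by (auto simp: in_set_conv_nth)
      have "xs!j \<le> xs!(length xs - 1)" using sorted_nth_mono[OF sxs(1), of j "length xs - 1"] j by simp
      then show ?thesis using xs_in[of "length xs - 1"] lenpos j by auto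
    qed
    show "\<forall>i<length xs - 1. xs!i < xs!Suc i" using strict by auto
    show "\<forall>i<length xs - 1. \<exists>\<alpha> \<beta>. \<forall>x\<in>{xs!i..xs!Suc i}. f x = \<alpha> + \<beta> * x"
      using affine by (metis Suc_eq_plus1 less_diff_conv)
  qed
  have nd_sub: "{x \<in> {0<..<D}. \<not> f differentiable (at x)} \<subseteq> B - {0, D}"
  proof
    fix x assume x: "x \<in> {x \<in> {0<..<D}. \<not> f differentiable (at x)}"
    show "x \<in> B - {0, D}"
    proof (rule ccontr)
      assume "x \<notin> B - {0, D}"
      then have xB: "x \<notin> B" using x by auto
      define J where "J = {i. i < length xs \<and> xs!i \<le> x}"
      have finJ: "finite J" by (simp add: J_def)
      have "0 \<in> J"
      proof -
        obtain j where j: "j < length xs" "xs!j = 0" using B0 setxs by (auto simp: in_set_conv_nth)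
        have "xs!0 \<le> xs!j" using sorted_nth_mono[OF sxs(1), of 0 j] j by simp
        then show ?thesis using lenpos j x by (auto simp: J_def)
      qed
      define i where "i = Max J"
      have iJ: "i \<in> J" unfolding i_def using finJ \<open>0 \<in> J\<close> by (intro Max_in) auto
      have si: "Suc i < length xs"
      proof (rule ccontr)
        assume "\<not> Suc i < length xs"
        then have il: "i = length xs - 1" using iJ by (auto simp: J_def)
        obtain j where j: "j < length xs" "xs!j = D" using DB setxs by (auto simp: in_set_conv_nth)
        have "xs!j \<le> xs!i" using sorted_nth_mono[OF sxs(1), of j i] j il by simp
        then show False using iJ j x by (auto simp: J_def)
      qed
      have up: "x < xs!Suc i"
      proof (rule ccontr)
        assume "\<not> x < xs!Suc i"
        then have "Suc i \<in> J" using si by (auto simp: J_def)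
        then show False using Max_ge[OF finJ] i_def by fastforce
      qed
      have lo: "xs!i < x"
      proof -
        have "xs!i \<in> B" using iJ setxs by (auto simp: J_def)
        then show ?thesis using iJ xB by (auto simp: J_def dest: le_neq_trans)
      qed
      obtain \<alpha> \<beta> where ab: "\<forall>z\<in>{xs!i..xs!Suc i}. f z = \<alpha> + \<beta> * z"
        using affine[OF si] by blast
      have "((\<lambda>z. \<alpha> + \<beta> * z) has_derivative (\<lambda>h. \<beta> * h)) (at x)"
        by (auto intro!: derivative_eq_intros)
      then have "(f has_derivative (\<lambda>h. \<beta> * h)) (at x)"
        by (rule has_derivative_transform_within_open[where s="{xs!i<..<xs!Suc i}"]) (use lo up ab in auto)
      then show False using x by (auto simp: differentiable_def)
    qed
  qed
  have part1: "finite {x \<in> {0<..<D}. \<not> f differentiable (at x)}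
         \<and> card {x \<in> {0<..<D}. \<not> f differentiable (at x)} \<le> n"
  proof (cases "D = 0")
    case True then show ?thesis by simp
  next
    case False
    have "card {x \<in> {0<..<D}. \<not> f differentiable (at x)} \<le> card (B - {0, D})"
      using card_mono[OF _ nd_sub] finB by auto
    also have "\<dots> = card B - 2" using B0 DB False finB by (simp add: card_Diff_subset)
    finally show ?thesis using cardB finite_subset[OF nd_sub] finB by auto
  qed
  show ?thesis using part1 part2 by blast
qed



lemma anc_self: "v \<in> ancestors par v"
  unfolding ancestors_def by (rule CollectI, rule exI[of _ 0], simp)

lemma anc_trans: "a \<in> ancestors par q \<Longrightarrow> ancestors par a \<subseteq> ancestors par q"
  unfolding ancestors_def by (auto, metis comp_apply funpow_add)

lemma anc_closed:
  assumes "\<forall>v\<in>V. par v \<in> V" "v \<in> V" shows "ancestors par v \<subseteq> V"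
proof -
  have "(par ^^ k) v \<in> V" for k by (induction k) (use assms in auto)
  then show ?thesis unfolding ancestors_def by auto
qed

locale setting =
  fixes V :: "'v set" and r :: 'v and par :: "'v \<Rightarrow> 'v"
    and w \<pi> p :: "'v \<Rightarrow> real" and a :: 'v and I :: "'v set"
  assumes tree: "is_rooted_tree V r par"
    and w_nonneg: "\<forall>v\<in>V. w v \<ge> 0"
    and pi_range: "\<forall>v\<in>V. 0 < \<pi> v \<and> \<pi> v \<le> 1"
    and a_in: "a \<in> V"
    and I_sub: "I \<subseteq> insert a (children V r par a)"
begin

abbreviation "VA \<equiv> VAI V par a I"
abbreviation "D \<equiv> depth r par w a"
abbreviation "GG \<equiv> G V r par w \<pi> p"
abbreviation "f \<equiv> fAI V r par w \<pi> p a I"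
definition "U Q = (\<Union>q\<in>Q. ancestors par q)"
definition "Wp Q = (\<Sum>u\<in>U Q - ancestors par a. w u)"
definition "E h = (\<Sum>om\<in>Pow V. prob_omega V \<pi> om * h om)"

lemma finV: "finite V" and parV: "\<forall>v\<in>V. par v \<in> V" and root: "\<forall>v\<in>V. \<exists>k. (par ^^ k) v = r"
  using tree unfolding is_rooted_tree_def by auto

lemma ancV: "v \<in> V \<Longrightarrow> ancestors par v \<subseteq> V" using anc_closed[OF parV] .

lemma VA_prop: "q \<in> VA \<Longrightarrow> q \<in> V \<and> a \<in> ancestors par q"
proof -
  assume "q \<in> VA"
  then obtain i where i: "i \<in> I" "q \<in> (if i = a then {a} else subtree V par i)"
    unfolding VAI_def by auto
  show ?thesis
  proof (cases "i = a")
    case True then show ?thesis using i a_in anc_self by auto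
  next
    case False
    then have "par i = a" using i I_sub by (auto simp: children_def)
    moreover have "q \<in> V" "i \<in> ancestors par q" using i False by (auto simp: subtree_def)
    moreover have "par i \<in> ancestors par i" unfolding ancestors_def
      by (rule CollectI, rule exI[of _ 1], simp)
    ultimately have "a \<in> ancestors par i" "i \<in> ancestors par q" "q \<in> V" by auto
    then show ?thesis using anc_trans[of i par q] by auto
  qed
qed

lemma VA_sub: "VA \<subseteq> V" using VA_prop by auto
lemma finVA: "finite VA" using finite_subset[OF VA_sub finV] .

lemma r_anc_a: "r \<in> ancestors par a"
  using root a_in unfolding ancestors_def by auto

lemma D_nonneg: "D \<ge> 0"
  unfolding depth_def using ancV[OF a_in] w_nonneg by (auto intro: sum_nonneg)

lemma U_sub: "Q \<subseteq> V \<Longrightarrow> U Q \<subseteq> V" unfolding U_def using ancV by auto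

lemma Wt_split:
  assumes "Q \<subseteq> VA"
  shows "Wt r par w Q = (if Q = {} then 0 else D) + Wp Q"
proof (cases "Q = {}")
  case True
  have W0: "Wt r par w {} = 0" "Wp {} = 0" unfolding Wt_def Wp_def U_def by simp_all
  show ?thesis unfolding True by (simp only: W0 simp_thms(6) if_True add_0_left)
next
  case False
  obtain q where q: "q \<in> Q" using False by auto
  then have "a \<in> ancestors par q" using assms VA_prop by auto
  then have "ancestors par a \<subseteq> ancestors par q" by (rule anc_trans)
  then have sub: "ancestors par a \<subseteq> U Q" using q unfolding U_def by auto
  have "Q \<subseteq> V" using assms VA_sub by auto
  then have fin: "finite (U Q)" using U_sub finV by (meson finite_subset)
  have eq: "U Q - {r} = (ancestors par a - {r}) \<union> (U Q - ancestors par a)" using sub r_anc_a by auto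
  have "Wt r par w Q = (\<Sum>u\<in>U Q - {r}. w u)" by (simp add: Wt_def U_def)
  also have "\<dots> = (\<Sum>u\<in>ancestors par a - {r}. w u) + Wp Q" unfolding eq Wp_def
    by (rule sum.union_disjoint) (use fin sub in \<open>auto intro: finite_subset\<close>)
  finally show ?thesis using False by (simp add: depth_def)
qed

lemma prob_empty:
  assumes "S \<subseteq> V"
  shows "(\<Sum>om\<in>Pow V. prob_omega V \<pi> om * (if om \<inter> S = {} then 1 else 0)) = (\<Prod>s\<in>S. 1 - \<pi> s)"
proof -
  define g where "g v = (if v \<in> S then 0 else \<pi> v)" for v
  have "(\<Prod>v\<in>V. g v + (1 - \<pi> v)) = (\<Sum>X\<in>Pow V. (\<Prod>x\<in>X. g x) * (\<Prod>x\<in>V-X. 1 - \<pi> x))"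
    by (rule prod_add[OF finV])
  also have "\<dots> = (\<Sum>om\<in>Pow V. prob_omega V \<pi> om * (if om \<inter> S = {} then 1 else 0))"
  proof (rule sum.cong[OF refl])
    fix X assume X: "X \<in> Pow V"
    have fX: "finite X" using X finV finite_subset by auto
    show "(\<Prod>x\<in>X. g x) * (\<Prod>x\<in>V-X. 1 - \<pi> x) = prob_omega V \<pi> X * (if X \<inter> S = {} then 1 else 0)"
    proof (cases "X \<inter> S = {}")
      case True
      then have "(\<Prod>x\<in>X. g x) = (\<Prod>x\<in>X. \<pi> x)" by (intro prod.cong) (auto simp: g_def)
      then show ?thesis using True by (simp add: prob_omega_def)
    next
      case False
      then obtain s where "s \<in> X" "s \<in> S" by auto
      then have "(\<Prod>x\<in>X. g x) = 0" using fX by (auto simp: g_def intro!: prod_zero)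
      then show ?thesis using False by simp
    qed
  qed
  also have "(\<Prod>v\<in>V. g v + (1 - \<pi> v)) = (\<Prod>s\<in>S. 1 - \<pi> s)"
  proof -
    have "(\<Prod>v\<in>V. g v + (1 - \<pi> v)) = (\<Prod>v\<in>V. if v \<in> S then 1 - \<pi> v else 1)"
      by (intro prod.cong) (auto simp: g_def)
    also have "\<dots> = (\<Prod>s\<in>S. 1 - \<pi> s)" using prod.If_cases[OF finV] assms
      by (simp add: prod.If_cases[OF finV] Int_absorb1)
    finally show ?thesis .
  qed
  finally show ?thesis by simp
qed

lemma G_eq:
  assumes "S \<subseteq> VA"
  shows "GG S x = (\<Sum>s\<in>S. p s * \<pi> s) - E (\<lambda>om. Wp (S \<inter> om)) - (D - x) * Pr \<pi> S"
proof -
  have SV: "S \<subseteq> V" using assms VA_sub by auto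
  have "(\<Sum>om\<in>Pow V. prob_omega V \<pi> om * Wt r par w (S \<inter> om))
      = (\<Sum>om\<in>Pow V. D * (prob_omega V \<pi> om - prob_omega V \<pi> om * (if om \<inter> S = {} then 1 else 0)) + prob_omega V \<pi> om * Wp (S \<inter> om))"
  proof (intro sum.cong refl)
    fix om assume "om \<in> Pow V"
    have "S \<inter> om \<subseteq> VA" using assms by auto
    from Wt_split[OF this] show "prob_omega V \<pi> om * Wt r par w (S \<inter> om) = D * (prob_omega V \<pi> om - prob_omega V \<pi> om * (if om \<inter> S = {} then 1 else 0)) + prob_omega V \<pi> om * Wp (S \<inter> om)"
      by (auto simp: algebra_simps Int_commute)
  qed
  also have "\<dots> = D * ((\<Sum>om\<in>Pow V. prob_omega V \<pi> om) - (\<Prod>s\<in>S. 1 - \<pi> s)) + E (\<lambda>om. Wp (S \<inter> om))"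
  proof -
    have "(\<Sum>om\<in>Pow V. D * (prob_omega V \<pi> om - prob_omega V \<pi> om * (if om \<inter> S = {} then 1 else 0)))
      = D * ((\<Sum>om\<in>Pow V. prob_omega V \<pi> om) - (\<Sum>om\<in>Pow V. prob_omega V \<pi> om * (if om \<inter> S = {} then 1 else 0)))"
      by (simp add: sum_distrib_left[symmetric] sum_subtractf)
    then show ?thesis by (simp add: sum.distrib prob_empty[OF SV] E_def)
  qed
  also have "(\<Sum>om\<in>Pow V. prob_omega V \<pi> om) = 1"
    using prob_empty[of "{}"] by simp
  finally have X: "(\<Sum>om\<in>Pow V. prob_omega V \<pi> om * Wt r par w (S \<inter> om)) = D * (1 - (\<Prod>s\<in>S. 1 - \<pi> s)) + E (\<lambda>om. Wp (S \<inter> om))" .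
  show ?thesis unfolding G_def Pr_def X by (simp add: ring_distribs)
qed

end


context setting begin

lemma prob_nonneg: assumes "om \<subseteq> V" shows "prob_omega V \<pi> om \<ge> 0"
  unfolding prob_omega_def
proof (intro mult_nonneg_nonneg prod_nonneg)
  fix v assume "v \<in> om" then show "0 \<le> \<pi> v" using assms pi_range by force
next
  fix v assume "v \<in> V - om" then show "0 \<le> 1 - \<pi> v" using pi_range by force
qed

lemma E_mono:
  assumes "\<And>om. om \<subseteq> V \<Longrightarrow> h1 om + h2 om \<le> h3 om + h4 om"
  shows "E h1 + E h2 \<le> E h3 + E h4"
proof -
  have "E h1 + E h2 = (\<Sum>om\<in>Pow V. prob_omega V \<pi> om * (h1 om + h2 om))"
    unfolding E_def by (simp add: sum.distrib ring_distribs)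
  also have "\<dots> \<le> (\<Sum>om\<in>Pow V. prob_omega V \<pi> om * (h3 om + h4 om))"
    by (intro sum_mono mult_left_mono assms prob_nonneg) auto
  also have "\<dots> = E h3 + E h4"
    unfolding E_def by (simp add: sum.distrib ring_distribs)
  finally show ?thesis .
qed

lemma Wp_sub:
  assumes "Q1 \<subseteq> V" "Q2 \<subseteq> V"
  shows "Wp (Q1 \<union> Q2) + Wp (Q1 \<inter> Q2) \<le> Wp Q1 + Wp Q2"
proof -
  define X where "X = U Q1 - ancestors par a"
  define Y where "Y = U Q2 - ancestors par a"
  define Z where "Z = U (Q1 \<inter> Q2) - ancestors par a"
  have XV: "X \<subseteq> V" "Y \<subseteq> V" using U_sub assms by (auto simp: X_def Y_def)
  have fX: "finite X" "finite Y" using XV finV finite_subset by auto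
  have un: "U (Q1 \<union> Q2) - ancestors par a = X \<union> Y" by (auto simp: X_def Y_def U_def)
  have ZXY: "Z \<subseteq> X \<inter> Y" by (auto simp: X_def Y_def Z_def U_def)
  have "Wp (Q1 \<union> Q2) + (\<Sum>u\<in>X \<inter> Y. w u) = Wp Q1 + Wp Q2"
    unfolding Wp_def un X_def[symmetric] Y_def[symmetric] using sum.union_inter[OF fX] by simp
  moreover have "Wp (Q1 \<inter> Q2) \<le> (\<Sum>u\<in>X \<inter> Y. w u)"
    unfolding Wp_def Z_def[symmetric]
    by (rule sum_mono2) (use fX ZXY XV w_nonneg in auto)
  ultimately show ?thesis by linarith
qed

lemma Pr_sub:
  assumes "S \<subseteq> V" "T \<subseteq> V"
  shows "Pr \<pi> (S \<union> T) + Pr \<pi> (S \<inter> T) \<le> Pr \<pi> S + Pr \<pi> T"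
proof -
  have fS: "finite S" "finite T" using assms finV finite_subset by auto
  define A where "A = (\<Prod>s\<in>S - T. 1 - \<pi> s)"
  define B where "B = (\<Prod>s\<in>T - S. 1 - \<pi> s)"
  define C where "C = (\<Prod>s\<in>S \<inter> T. 1 - \<pi> s)"
  have pS: "\<forall>v\<in>S. 0 \<le> \<pi> v \<and> \<pi> v \<le> 1" "\<forall>v\<in>T. 0 \<le> \<pi> v \<and> \<pi> v \<le> 1"
    using assms pi_range by force+
  have rng: "0 \<le> A" "A \<le> 1" "0 \<le> B" "B \<le> 1" "0 \<le> C" "C \<le> 1"
    unfolding A_def B_def C_def using pS
    by (auto intro!: prod_nonneg prod_le_1)
  have e1: "(\<Prod>s\<in>S. 1 - \<pi> s) = A * C"
  proof -
    have "S = (S - T) \<union> (S \<inter> T)" by auto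
    then show ?thesis unfolding A_def C_def
      by (metis Diff_disjoint Int_Diff fS(1) finite_Diff finite_Int inf_commute prod.union_disjoint Int_Diff_disjoint)
  qed
  have e2: "(\<Prod>s\<in>T. 1 - \<pi> s) = B * C"
  proof -
    have eq: "T = (T - S) \<union> (S \<inter> T)" by auto
    show ?thesis unfolding B_def C_def
      by (subst eq, rule prod.union_disjoint) (use fS in auto)
  qed
  have e3: "(\<Prod>s\<in>S \<union> T. 1 - \<pi> s) = A * B * C"
  proof -
    have eq: "S \<union> T = (S - T) \<union> (T - S) \<union> (S \<inter> T)" by auto
    have "(\<Prod>s\<in>(S - T) \<union> (T - S) \<union> (S \<inter> T). 1 - \<pi> s) = (\<Prod>s\<in>(S - T) \<union> (T - S). 1 - \<pi> s) * C"
      unfolding C_def by (rule prod.union_disjoint) (use fS in auto)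
    also have "(\<Prod>s\<in>(S - T) \<union> (T - S). 1 - \<pi> s) = A * B"
      unfolding A_def B_def by (rule prod.union_disjoint) (use fS in auto)
    finally show ?thesis using eq by simp
  qed
  have "C * (1 - A) * (1 - B) \<ge> 0" using rng by (intro mult_nonneg_nonneg) auto
  then show ?thesis unfolding Pr_def e1 e2 e3 C_def[symmetric] by (simp add: algebra_simps)
qed

lemma G_affine: "GG S y = GG S x + (y - x) * Pr \<pi> S"
  unfolding G_def by (simp add: algebra_simps)

lemma Pr_mono:
  assumes "S \<subseteq> T" "T \<subseteq> V" shows "Pr \<pi> S \<le> Pr \<pi> T"
proof -
  have fT: "finite T" using assms finV finite_subset by auto
  have eq: "T = S \<union> (T - S)" using assms by auto
  have "(\<Prod>s\<in>T. 1 - \<pi> s) = (\<Prod>s\<in>S. 1 - \<pi> s) * (\<Prod>s\<in>T - S. 1 - \<pi> s)"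
    by (subst eq, rule prod.union_disjoint) (use fT assms in \<open>auto intro: finite_subset\<close>)
  moreover have pT: "\<forall>v\<in>T. 0 \<le> \<pi> v \<and> \<pi> v \<le> 1" using assms pi_range by force
  moreover have "0 \<le> (\<Prod>s\<in>S. 1 - \<pi> s)" using assms pT by (auto intro!: prod_nonneg)
  moreover have "(\<Prod>s\<in>T - S. 1 - \<pi> s) \<le> 1" using pT by (auto intro!: prod_le_1)
  ultimately have "(\<Prod>s\<in>T. 1 - \<pi> s) \<le> (\<Prod>s\<in>S. 1 - \<pi> s)"
    by (metis mult_left_le)
  then show ?thesis unfolding Pr_def by simp
qed

lemma supermod:
  assumes "S \<subseteq> VA" "T \<subseteq> VA" "x \<le> D"
  shows "GG S x + GG T x \<le> GG (S \<union> T) x + GG (S \<inter> T) x"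
proof -
  have SV: "S \<subseteq> V" "T \<subseteq> V" using assms VA_sub by auto
  have fS: "finite S" "finite T" using SV finV finite_subset by auto
  have lin: "(\<Sum>s\<in>S \<union> T. p s * \<pi> s) + (\<Sum>s\<in>S \<inter> T. p s * \<pi> s) = (\<Sum>s\<in>S. p s * \<pi> s) + (\<Sum>s\<in>T. p s * \<pi> s)"
    by (rule sum.union_inter[OF fS])
  have ew: "E (\<lambda>om. Wp ((S \<union> T) \<inter> om)) + E (\<lambda>om. Wp ((S \<inter> T) \<inter> om)) \<le> E (\<lambda>om. Wp (S \<inter> om)) + E (\<lambda>om. Wp (T \<inter> om))"
  proof (rule E_mono)
    fix om assume "om \<subseteq> V"
    have "(S \<union> T) \<inter> om = (S \<inter> om) \<union> (T \<inter> om)" "(S \<inter> T) \<inter> om = (S \<inter> om) \<inter> (T \<inter> om)" by auto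
    then show "Wp ((S \<union> T) \<inter> om) + Wp ((S \<inter> T) \<inter> om) \<le> Wp (S \<inter> om) + Wp (T \<inter> om)"
      using Wp_sub[of "S \<inter> om" "T \<inter> om"] SV by auto
  qed
  have pr: "(D - x) * (Pr \<pi> (S \<union> T) + Pr \<pi> (S \<inter> T)) \<le> (D - x) * (Pr \<pi> S + Pr \<pi> T)"
    using Pr_sub[OF SV] assms(3) by (intro mult_left_mono) auto
  have u: "S \<union> T \<subseteq> VA" "S \<inter> T \<subseteq> VA" using assms by auto
  show ?thesis unfolding G_eq[OF assms(1)] G_eq[OF assms(2)] G_eq[OF u(1)] G_eq[OF u(2)]
    using lin ew pr by (simp add: ring_distribs)
qed

end


context setting begin

abbreviation "opt S x \<equiv> optimal_set V r par w \<pi> p a I S x"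
definition "maxopt S x \<longleftrightarrow> opt S x \<and> (\<forall>S'. S \<subset> S' \<and> S' \<subseteq> VA \<longrightarrow> \<not> opt S' x)"

lemma f_ge: "S \<subseteq> VA \<Longrightarrow> GG S x \<le> f x"
  unfolding fAI_def using finVA by (intro Max_ge) auto

lemma f_attained: "\<exists>S. S \<subseteq> VA \<and> GG S x = f x"
proof -
  have "f x \<in> (\<lambda>S. GG S x) ` Pow VA"
    unfolding fAI_def using finVA by (intro Max_in) auto
  then show ?thesis by auto
qed

lemma opt_union:
  assumes "opt S x" "opt T x" "x \<le> D"
  shows "opt (S \<union> T) x"
proof -
  have s: "S \<subseteq> VA" "T \<subseteq> VA" "GG S x = f x" "GG T x = f x" using assms unfolding optimal_set_def by auto
  have "GG (S \<union> T) x \<le> f x" "GG (S \<inter> T) x \<le> f x" using s f_ge[of "S \<union> T" x] f_ge[of "S \<inter> T" x] by auto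
  moreover have "GG S x + GG T x \<le> GG (S \<union> T) x + GG (S \<inter> T) x" using supermod[OF s(1) s(2) assms(3)] .
  ultimately have "GG (S \<union> T) x = f x" using s by linarith
  then show ?thesis using s unfolding optimal_set_def by auto
qed

lemma maxopt_contains:
  assumes "maxopt S x" "opt T x" "x \<le> D" shows "T \<subseteq> S"
proof (rule ccontr)
  assume "\<not> T \<subseteq> S"
  then have "S \<subset> S \<union> T" by auto
  moreover have "opt (S \<union> T) x" using opt_union assms unfolding maxopt_def by auto
  ultimately show False using assms(1) unfolding maxopt_def optimal_set_def by blast
qed

lemma maxopt_exists: "\<exists>S. maxopt S x"
proof -
  define A where "A = {S. opt S x}"
  have "finite A" unfolding A_def optimal_set_def
    by (rule finite_subset[of _ "Pow VA"]) (use finVA in auto)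
  moreover have "A \<noteq> {}" using f_attained unfolding A_def optimal_set_def by auto
  ultimately obtain m where m: "m \<in> A" "\<forall>b\<in>A. m \<le> b \<longrightarrow> m = b"
    using finite_has_maximal by blast
  then have "maxopt m x" unfolding maxopt_def A_def by auto
  then show ?thesis by blast
qed

lemma maxopt_mono:
  assumes "maxopt S x" "maxopt T y" "x \<le> y" "y \<le> D"
  shows "S \<subseteq> T"
proof -
  have s: "S \<subseteq> VA" "T \<subseteq> VA" "GG S x = f x" "GG T y = f y"
    using assms unfolding maxopt_def optimal_set_def by auto
  have i: "S \<inter> T \<subseteq> VA" "S \<union> T \<subseteq> VA" using s by auto
  have "GG (S \<inter> T) x \<le> GG S x" using f_ge[OF i(1)] s by simp
  moreover have "Pr \<pi> (S \<inter> T) \<le> Pr \<pi> S" using Pr_mono[of "S \<inter> T" S] s VA_sub by auto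
  moreover have "(y - x) * Pr \<pi> (S \<inter> T) \<le> (y - x) * Pr \<pi> S"
    using calculation(2) assms(3) by (intro mult_left_mono) auto
  ultimately have "GG (S \<inter> T) y \<le> GG S y"
    using G_affine[of "S \<inter> T" y x] G_affine[of S y x] by linarith
  moreover have "GG S y + GG T y \<le> GG (S \<union> T) y + GG (S \<inter> T) y"
    using supermod[OF s(1) s(2) assms(4)] .
  moreover have "GG (S \<union> T) y \<le> f y" using f_ge[OF i(2)] .
  ultimately have "GG (S \<union> T) y = f y" using s by linarith
  then have "opt (S \<union> T) y" using i unfolding optimal_set_def by auto
  then have "S \<union> T \<subseteq> T" using maxopt_contains assms by auto
  then show ?thesis by auto
qed

definition "Mx x = (SOME S. maxopt S x)"

lemma Mx: "maxopt (Mx x) x" unfolding Mx_def using maxopt_exists by (rule someI_ex)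

lemma maxopt_unique: assumes "maxopt S x" "x \<le> D" shows "S = Mx x"
proof -
  have o1: "opt S x" "opt (Mx x) x" using assms(1) Mx[of x] unfolding maxopt_def by auto
  have "S \<subseteq> Mx x" by (rule maxopt_contains[OF Mx o1(1) assms(2)])
  moreover have "Mx x \<subseteq> S" by (rule maxopt_contains[OF assms(1) o1(2) assms(2)])
  ultimately show ?thesis by (rule subset_antisym)
qed

lemma matry_eq: "matryoshka V r par w \<pi> p a I = Mx ` {0..D}"
proof
  show "matryoshka V r par w \<pi> p a I \<subseteq> Mx ` {0..D}"
  proof
    fix S assume "S \<in> matryoshka V r par w \<pi> p a I"
    then obtain x where x: "x \<in> {0..D}" "maxopt S x" unfolding matryoshka_def maxopt_def by auto
    then have "S = Mx x" using maxopt_unique by auto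
    then show "S \<in> Mx ` {0..D}" using x(1) by (rule image_eqI)
  qed
  show "Mx ` {0..D} \<subseteq> matryoshka V r par w \<pi> p a I"
  proof
    fix S assume "S \<in> Mx ` {0..D}"
    then obtain x where x: "x \<in> {0..D}" "S = Mx x" by auto
    have "maxopt S x" using Mx x by simp
    then have "opt S x" "\<forall>S'. S \<subset> S' \<and> S' \<subseteq> VA \<longrightarrow> \<not> opt S' x" "S \<subseteq> VA"
      unfolding maxopt_def optimal_set_def by auto
    then show "S \<in> matryoshka V r par w \<pi> p a I" unfolding matryoshka_def using x(1) by blast
  qed
qed

lemma Mx_sub: "Mx x \<subseteq> VA" using Mx unfolding maxopt_def optimal_set_def by auto

lemma Mx_mono: "0 \<le> x \<Longrightarrow> x \<le> y \<Longrightarrow> y \<le> D \<Longrightarrow> Mx x \<subseteq> Mx y"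
  using maxopt_mono[OF Mx Mx] by auto

lemma chain: "\<forall>S\<in>Mx ` {0..D}. \<forall>S'\<in>Mx ` {0..D}. S \<subseteq> S' \<or> S' \<subseteq> S"
proof (intro ballI)
  fix S S' assume "S \<in> Mx ` {0..D}" "S' \<in> Mx ` {0..D}"
  then obtain x y where "x \<in> {0..D}" "y \<in> {0..D}" "S = Mx x" "S' = Mx y" by auto
  then show "S \<subseteq> S' \<or> S' \<subseteq> S" using Mx_mono[of x y] Mx_mono[of y x] by (cases "x \<le> y") auto
qed

lemma chain_card:
  fixes C :: "'a set set"
  assumes "finite X" "\<forall>S\<in>C. S \<subseteq> X" "\<forall>S\<in>C. \<forall>S'\<in>C. S \<subseteq> S' \<or> S' \<subseteq> S"
  shows "finite C \<and> card C \<le> card X + 1"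
proof -
  have "C \<subseteq> Pow X" using assms(2) by auto
  then have fC: "finite C" using assms(1) by (simp add: finite_subset)
  have "inj_on card C"
  proof
    fix S S' assume "S \<in> C" "S' \<in> C" "card S = card S'"
    have "S \<subseteq> X" "S' \<subseteq> X" using assms(2) \<open>S \<in> C\<close> \<open>S' \<in> C\<close> by auto
    then have fS: "finite S" "finite S'" using assms(1) finite_subset by auto
    show "S = S'"
    proof (cases "S \<subseteq> S'")
      case True then show ?thesis using card_subset_eq[OF fS(2) True] \<open>card S = card S'\<close> by simp
    next
      case False then have "S' \<subseteq> S" using assms(3) \<open>S \<in> C\<close> \<open>S' \<in> C\<close> by blast
      then show ?thesis using card_subset_eq[OF fS(1)] \<open>card S = card S'\<close> by metis
    qed
  qed
  then have "card C = card (card ` C)" by (simp add: card_image)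
  also have "\<dots> \<le> card {0..card X}"
  proof (rule card_mono)
    show "card ` C \<subseteq> {0..card X}"
    proof
      fix n assume "n \<in> card ` C"
      then obtain S where "S \<in> C" "n = card S" by auto
      then have "S \<subseteq> X" using assms(2) by auto
      then show "n \<in> {0..card X}" using card_mono[OF assms(1)] \<open>n = card S\<close> by auto
    qed
  qed simp
  finally show ?thesis using fC by simp
qed

end


theorem proposition5:
  fixes V :: "'v set" and r :: 'v and par :: "'v \<Rightarrow> 'v"
    and w \<pi> p :: "'v \<Rightarrow> real" and a :: 'v and I :: "'v set"
  assumes tree: "is_rooted_tree V r par"
    and w_nonneg: "\<forall>v\<in>V. w v \<ge> 0"
    and pi_range: "\<forall>v\<in>V. 0 < \<pi> v \<and> \<pi> v \<le> 1"
    and a_in: "a \<in> V"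
    and I_sub: "I \<subseteq> insert a (children V r par a)"
  defines "f \<equiv> fAI V r par w \<pi> p a I"
    and "n \<equiv> card (VAI V par a I)"
    and "D \<equiv> depth r par w a"
  shows "(finite {x \<in> {0<..<D}. \<not> f differentiable (at x)}
         \<and> card {x \<in> {0<..<D}. \<not> f differentiable (at x)} \<le> n)
     \<and> (\<exists>k t. k \<le> n + 1 \<and> t 0 = 0 \<and> t k = D \<and> (\<forall>i<k. t i < t (Suc i)) \<and>
           (\<forall>i<k. \<exists>\<alpha> \<beta>. \<forall>x\<in>{t i..t (Suc i)}. f x = \<alpha> + \<beta> * x))
     \<and> (\<forall>S\<in>matryoshka V r par w \<pi> p a I. \<forall>S'\<in>matryoshka V r par w \<pi> p a I. S \<subseteq> S' \<or> S' \<subseteq> S)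
     \<and> finite (matryoshka V r par w \<pi> p a I) \<and> card (matryoshka V r par w \<pi> p a I) \<le> n + 1"
proof -
  interpret setting V r par w \<pi> p a I using assms by unfold_locales
  have sub: "\<forall>S\<in>Mx ` {0..D}. S \<subseteq> VAI V par a I" using Mx_sub by auto
  have ch: "\<forall>S\<in>Mx ` {0..D}. \<forall>S'\<in>Mx ` {0..D}. S \<subseteq> S' \<or> S' \<subseteq> S"
    unfolding D_def by (rule chain)
  have cc: "finite (Mx ` {0..D}) \<and> card (Mx ` {0..D}) \<le> n + 1"
    unfolding n_def by (rule chain_card[OF finVA sub ch])
  have fM: "f x = G V r par w \<pi> p (Mx x) 0 + Pr \<pi> (Mx x) * x" if "x \<in> {0..D}" for x
    using Mx[of x] G_affine[of "Mx x" x 0] unfolding maxopt_def optimal_set_def f_def by (simp add: mult.commute)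
  have fge: "G V r par w \<pi> p S 0 + Pr \<pi> S * x \<le> f x" if "x \<in> {0..D}" "S \<in> Mx ` {0..D}" for x S
    using that f_ge[of S x] Mx_sub G_affine[of S x 0] unfolding f_def by (auto simp: mult.commute)
  have D0: "D \<ge> 0" unfolding D_def by (rule D_nonneg)
  have mono: "\<And>x y. 0 \<le> x \<Longrightarrow> x \<le> y \<Longrightarrow> y \<le> D \<Longrightarrow> Mx x \<subseteq> Mx y" unfolding D_def by (rule Mx_mono)
  have fin: "finite (Mx ` {0..D})" and cM: "card (Mx ` {0..D}) \<le> n + 1" using cc by auto
  have P: "(finite {x \<in> {0<..<D}. \<not> f differentiable (at x)}
         \<and> card {x \<in> {0<..<D}. \<not> f differentiable (at x)} \<le> n)
     \<and> (\<exists>k t. k \<le> n + 1 \<and> t 0 = 0 \<and> t k = D \<and> (\<forall>i<k. t i < t (Suc i)) \<and>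
           (\<forall>i<k. \<exists>\<alpha> \<beta>. \<forall>x\<in>{t i..t (Suc i)}. f x = \<alpha> + \<beta> * x))"
    by (rule pieces[OF D0 mono fin cM fM fge])
  have m: "matryoshka V r par w \<pi> p a I = Mx ` {0..D}" unfolding D_def by (rule matry_eq)
  show ?thesis unfolding m
  proof (intro conjI)
    show "finite {x \<in> {0<..<D}. \<not> f differentiable (at x)}" using P by (rule conjunct1[OF conjunct1])
    show "card {x \<in> {0<..<D}. \<not> f differentiable (at x)} \<le> n" using P by (rule conjunct2[OF conjunct1])
    show "\<exists>k t. k \<le> n + 1 \<and> t 0 = 0 \<and> t k = D \<and> (\<forall>i<k. t i < t (Suc i)) \<and>
           (\<forall>i<k. \<exists>\<alpha> \<beta>. \<forall>x\<in>{t i..t (Suc i)}. f x = \<alpha> + \<beta> * x)" using P by (rule conjunct2)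
  qed (use ch fin cM in auto)
qed

end
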